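(* Let $n\ge2$ be an integer and $\alpha=1-\frac1n$. There is a constant $C_n>0$ depending only on $n$ such that for every real $\beta\le0$ and every $y\le-1$, $$C_n^{-1}\frac{e^y(-y)^{\frac{1-2\alpha}{4}}}{\Gamma(\alpha-\beta)}\int_{1/\sqrt{-y}}^\infty e^{G(u)}\,du\le\mathcal{M}(\beta,\alpha,y)\le C_n\frac{e^y(-y)^{\frac{1-2\alpha}{4}}}{\Gamma(\alpha-\beta)}\int_0^\infty e^{G(u)}\,du,$$ where $G(u)=-u^2+2\sqrt{-y}\,u+(\alpha-2\beta-\tfrac12)\log u$.
   Context: $(x)_k=\prod_{m=1}^k(x+m-1)$, $(x)_0=1$, and $\mathcal{M}(\beta,\alpha,y)=\sum_{k\ge0}\frac{(\beta)_k}{(\alpha)_k}\frac{y^k}{k!}$ (Kummer's function). *)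

theory Defs
  imports "HOL-Analysis.Analysis"
begin

definition kummerM :: "real \<Rightarrow> real \<Rightarrow> real \<Rightarrow> real" where
  "kummerM b a y = (\<Sum>k. pochhammer b k / pochhammer a k * y ^ k / fact k)"

definition kummerG :: "real \<Rightarrow> real \<Rightarrow> real \<Rightarrow> real \<Rightarrow> real" where
  "kummerG a b y u = - (u ^ 2) + 2 * sqrt (- y) * u + (a - 2 * b - 1 / 2) * ln u"

end

theory Submission
  imports Defs "HOL-Computational_Algebra.Formal_Power_Series"
begin


lemma summable_M:
  fixes a b y :: real
  assumes a: "a > 0"
  shows "summable (\<lambda>k. norm (pochhammer b k / pochhammer a k * y ^ k / fact k))"
proof (rule summable_ratio_test[where c="1/2" and N="nat \<lceil>2 * (\<bar>b\<bar> + 1) * (\<bar>y\<bar> + 1)\<rceil> + 1"])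
  fix k assume k: "k \<ge> nat \<lceil>2 * (\<bar>b\<bar> + 1) * (\<bar>y\<bar> + 1)\<rceil> + 1"
  define B where "B = \<bar>b\<bar>"
  define Y where "Y = \<bar>y\<bar>"
  define K where "K = real k"
  have B0: "B \<ge> 0" and Y0: "Y \<ge> 0" by (auto simp: B_def Y_def)
  have k1: "K \<ge> 1" using k unfolding K_def by linarith
  have kb: "K \<ge> 2 * (B + 1) * (Y + 1)" using k unfolding K_def B_def Y_def by linarith
  have pa: "pochhammer a k > 0" using a by (simp add: pochhammer_pos)
  have r: "\<bar>b + real k\<bar> * \<bar>y\<bar> \<le> 1/2 * ((a + real k) * (real k + 1))"
  proof -
    have "\<bar>b + real k\<bar> \<le> B + K" unfolding B_def K_def by simp
    then have 1: "\<bar>b + real k\<bar> * \<bar>y\<bar> \<le> (B + K) * Y" unfolding Y_def by (intro mult_right_mono) auto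
    have 2: "(B + K) * Y \<le> 1/2 * (K * (K + 1))"
    proof -
      have "B + K \<le> (B + 1) * K" using B0 k1 mult_left_mono[of 1 K B] by (simp add: algebra_simps)
      then have a1: "(B + K) * Y \<le> K * ((B + 1) * Y)" using mult_right_mono[OF _ Y0] by (metis mult.assoc mult.commute)
      have "(B + 1) * Y \<le> (B + 1) * (Y + 1)" using B0 by (intro mult_left_mono) auto
      moreover have "2 * ((B + 1) * (Y + 1)) \<le> K" using kb by (simp only: mult.assoc)
      ultimately have "(B + 1) * Y \<le> K / 2" by linarith
      then have "K * ((B + 1) * Y) \<le> K * (K / 2)" using k1 by (intro mult_left_mono) auto
      then show ?thesis using a1 k1 by (simp add: algebra_simps)
    qed
    have 3: "K * (K + 1) \<le> (a + real k) * (real k + 1)"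
      unfolding K_def using a by (intro mult_right_mono) auto
    show ?thesis using 1 2 3 by linarith
  qed
  show "norm (norm (pochhammer b (Suc k) / pochhammer a (Suc k) * y ^ Suc k / fact (Suc k)))
      \<le> 1/2 * norm (norm (pochhammer b k / pochhammer a k * y ^ k / fact k))"
  proof -
    have ak0: "a + real k > 0" using a by simp
    define T where "T = \<bar>pochhammer b k\<bar> / pochhammer a k * \<bar>y\<bar> ^ k / fact k"
    have T0: "T \<ge> 0" unfolding T_def using pa by simp
    have e: "norm (norm (pochhammer b (Suc k) / pochhammer a (Suc k) * y ^ Suc k / fact (Suc k)))
      = T * (\<bar>b + real k\<bar> * \<bar>y\<bar> / ((a + real k) * (real k + 1)))"
    proof -
      have f: "fact (Suc k) = (real k + 1) * fact k" by (simp add: algebra_simps)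
      have p1: "pochhammer a (Suc k) = pochhammer a k * (a + real k)" by (simp add: pochhammer_Suc)
      have p2: "pochhammer b (Suc k) = pochhammer b k * (b + real k)" by (simp add: pochhammer_Suc)
      show ?thesis unfolding f p1 p2 T_def using pa ak0
        by (simp add: abs_mult power_abs divide_simps)
    qed
    have "\<bar>b + real k\<bar> * \<bar>y\<bar> / ((a + real k) * (real k + 1)) \<le> 1/2"
      using r ak0 by (simp add: divide_simps)
    then have le: "T * (\<bar>b + real k\<bar> * \<bar>y\<bar> / ((a + real k) * (real k + 1))) \<le> T * (1/2)"
      using T0 by (intro mult_left_mono) auto
    have n: "norm (norm (pochhammer b k / pochhammer a k * y ^ k / fact k)) = T"
      unfolding T_def using pa by (simp add: abs_mult power_abs)
    show ?thesis unfolding e n using le by (simp only: mult.commute)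
  qed
qed simp

lemma poch_neg_nat_fact:
  assumes "i \<le> k"
  shows "pochhammer (- real k) i / fact i = (-1) ^ i * (fact k / (fact i * fact (k - i)))"
proof -
  have "(real k gchoose i) = (-1) ^ i * pochhammer (- real k) i / fact i"
    by (rule gbinomial_pochhammer)
  moreover have "(-1::real) ^ i * (-1) ^ i = 1" by (simp flip: power_mult_distrib)
  ultimately have "pochhammer (- real k) i / fact i = (-1) ^ i * (real k gchoose i)"
    by (metis (no_types, lifting) mult.assoc mult_1 times_divide_eq_right)
  also have "(real k gchoose i) = real (k choose i)" by (simp add: binomial_gbinomial)
  also have "real (k choose i) = fact k / (fact i * fact (k - i))"
    using assms by (rule binomial_fact)
  finally show ?thesis .
qed

lemma kummer_transform:
  fixes a b y :: real
  assumes a: "a > 0"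
  shows "kummerM b a y = exp y * kummerM (a - b) a (- y)"
proof -
  define A where "A i = pochhammer b i / pochhammer a i * y ^ i / fact i" for i
  define E where "E j = (- y) ^ j / fact j" for j :: nat
  have sA: "summable (\<lambda>k. norm (A k))" unfolding A_def by (rule summable_M[OF a])
  have sE: "summable (\<lambda>k. norm (E k))"
  proof -
    have "summable (\<lambda>n. inverse (fact n) * \<bar>y\<bar> ^ n)" by (rule summable_exp)
    moreover have "norm (E n) = inverse (fact n) * \<bar>y\<bar> ^ n" for n
      unfolding E_def by (simp add: abs_mult power_abs divide_inverse mult.commute)
    ultimately show ?thesis by simp
  qed
  have eE: "(\<Sum>j. E j) = exp (- y)"
  proof -
    have "(\<lambda>n. (- y) ^ n /\<^sub>R fact n) sums exp (- y)" by (rule exp_converges)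
    then have "E sums exp (- y)" unfolding E_def by (simp add: divide_inverse_commute scaleR_conv_of_real)
    then show ?thesis by (rule sums_unique[symmetric])
  qed
  have inner: "(\<Sum>i\<le>k. A i * E (k - i)) = pochhammer (a - b) k / pochhammer a k * (- y) ^ k / fact k" for k
  proof -
    have t: "A i * E (k - i) = ((- y) ^ k / fact k) *
        ((pochhammer b i * pochhammer (- of_nat k) i) / (of_nat (fact i) * pochhammer a i))" if "i \<le> k" for i
    proof -
      have pk: "pochhammer (- real k) i = (-1) ^ i * (fact k / (fact i * fact (k - i))) * fact i"
        using poch_neg_nat_fact[OF that] by (simp add: field_simps)
      have yy: "y ^ i * (- y) ^ (k - i) = (-1) ^ i * (- y) ^ k"
      proof -
        have "(- y) ^ k = (- y) ^ i * (- y) ^ (k - i)" using that by (simp flip: power_add)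
        then show ?thesis by (simp add: power_minus' algebra_simps)
      qed
      have "A i * E (k - i) = pochhammer b i / pochhammer a i * (y ^ i * (- y) ^ (k - i)) / (fact i * fact (k - i))"
        unfolding A_def E_def by (simp add: field_simps)
      also have "\<dots> = ((- y) ^ k / fact k) *
        ((pochhammer b i * pochhammer (- of_nat k) i) / (of_nat (fact i) * pochhammer a i))"
        unfolding yy pk by (simp add: field_simps)
      finally show ?thesis .
    qed
    have "(\<Sum>i\<le>k. A i * E (k - i)) = ((- y) ^ k / fact k) *
        (\<Sum>i\<in>{0..k}. (pochhammer b i * pochhammer (- of_nat k) i) / (of_nat (fact i) * pochhammer a i))"
      by (simp add: sum_distrib_left t atMost_atLeast0)
    also have "(\<Sum>i\<in>{0..k}. (pochhammer b i * pochhammer (- of_nat k) i) / (of_nat (fact i) * pochhammer a i))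
       = pochhammer (a - b) k / pochhammer a k"
      by (rule Vandermonde_pochhammer) (use a in auto)
    finally show ?thesis by (simp add: mult_ac)
  qed
  have "kummerM b a y * exp (- y) = (\<Sum>k. A k) * (\<Sum>k. E k)"
    unfolding kummerM_def A_def eE ..
  also have "\<dots> = (\<Sum>k. \<Sum>i\<le>k. A i * E (k - i))" by (rule Cauchy_product[OF sA sE])
  also have "\<dots> = kummerM (a - b) a (- y)" unfolding inner kummerM_def ..
  finally have "kummerM b a y * exp (- y) = kummerM (a - b) a (- y)" .
  then show ?thesis by (simp add: exp_minus field_simps)
qed

definition F0 :: "real \<Rightarrow> real \<Rightarrow> real" where
  "F0 al s = (\<Sum>k. s ^ k / (pochhammer al k * fact k))"

lemma pochhammer_ge_power:
  fixes al :: real assumes "al > 0" shows "pochhammer al k \<ge> al ^ k"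
proof (induction k)
  case (Suc k)
  have "al ^ Suc k = al ^ k * al" by simp
  also have "\<dots> \<le> pochhammer al k * (al + real k)"
    using Suc assms by (intro mult_mono) (auto simp: pochhammer_nonneg)
  finally show ?case by (simp add: pochhammer_Suc)
qed simp

lemma summable_F0:
  fixes al s :: real assumes al: "al > 0" and s: "s \<ge> 0"
  shows "summable (\<lambda>k. s ^ k / (pochhammer al k * fact k))"
proof (rule summable_comparison_test'[OF summable_exp[of "s / al"]])
  fix k :: nat
  have p: "pochhammer al k \<ge> al ^ k" by (rule pochhammer_ge_power[OF al])
  have "al ^ k > 0" using al by simp
  have "s ^ k / (pochhammer al k * fact k) \<le> s ^ k / (al ^ k * fact k)"
    using p \<open>al ^ k > 0\<close> s by (intro divide_left_mono mult_right_mono) auto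
  also have "\<dots> = inverse (fact k) * (s / al) ^ k" by (simp add: power_divide field_simps)
  finally show "norm (s ^ k / (pochhammer al k * fact k)) \<le> inverse (fact k) * (s / al) ^ k"
    using s al pochhammer_pos[OF al, of k] by simp
qed

lemma F0_nonneg: "al > 0 \<Longrightarrow> s \<ge> 0 \<Longrightarrow> F0 al s \<ge> 0"
  unfolding F0_def by (intro suminf_nonneg summable_F0) (auto intro!: divide_nonneg_pos mult_pos_pos pochhammer_pos)

lemma gamma_rep:
  fixes a al x :: real
  assumes a: "a > 0" and al: "al > 0" and x: "x \<ge> 0"
  shows "ennreal (Gamma a * kummerM a al x) =
    (\<integral>\<^sup>+t. ennreal (indicator {0..} t * t powr (a - 1) * exp (- t) * F0 al (x * t)) \<partial>lborel)"
proof -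
  define c where "c k = x ^ k / (pochhammer al k * fact k)" for k
  have c0: "c k \<ge> 0" for k unfolding c_def using x al by (auto intro!: divide_nonneg_pos mult_pos_pos pochhammer_pos)
  have gp: "Gamma (a + real k) = Gamma a * pochhammer a k" for k
  proof -
    have "a \<notin> \<int>\<^sub>\<le>\<^sub>0" using a nonpos_Ints_nonpos by fastforce
    then show ?thesis using pochhammer_Gamma[of a k] Gamma_real_pos[OF a] by simp
  qed
  define f where "f k t = ennreal (indicator {0..} t * t powr (a + real k - 1) / exp t * c k)" for k t
  have pt: "ennreal (indicator {0..} t * t powr (a - 1) * exp (- t) * F0 al (x * t)) = (\<Sum>k. f k t)" for t
  proof (cases "t \<ge> 0")
    case True
    have eq: "indicator {0..} t * t powr (a - 1) * exp (- t) * ((x * t) ^ k / (pochhammer al k * fact k))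
        = indicator {0..} t * t powr (a + real k - 1) / exp t * c k" for k
    proof (cases "t = 0")
      case True then show ?thesis using a by (simp add: c_def)
    next
      case False
      then have tp: "t > 0" using \<open>t \<ge> 0\<close> by simp
      have "t powr (a + real k - 1) = t powr (a - 1) * t ^ k"
        using tp by (simp add: powr_add[symmetric] powr_realpow[symmetric] algebra_simps)
      then show ?thesis using True by (simp add: c_def power_mult_distrib exp_minus field_simps)
    qed
    have sm: "summable (\<lambda>k. indicator {0..} t * t powr (a - 1) * exp (- t) * ((x * t) ^ k / (pochhammer al k * fact k)))"
      by (intro summable_mult summable_F0 al) (use x True in simp)
    have "indicator {0..} t * t powr (a - 1) * exp (- t) * F0 al (x * t)
       = (\<Sum>k. indicator {0..} t * t powr (a - 1) * exp (- t) * ((x * t) ^ k / (pochhammer al k * fact k)))"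
      unfolding F0_def by (rule suminf_mult[symmetric]) (intro summable_F0 al, use x True in simp)
    also have "\<dots> = (\<Sum>k. indicator {0..} t * t powr (a + real k - 1) / exp t * c k)"
      unfolding eq ..
    finally have "ennreal (indicator {0..} t * t powr (a - 1) * exp (- t) * F0 al (x * t))
       = ennreal (\<Sum>k. indicator {0..} t * t powr (a + real k - 1) / exp t * c k)" by simp
    also have "\<dots> = (\<Sum>k. f k t)" unfolding f_def
      by (rule suminf_ennreal2[symmetric]) (use c0 True sm eq in auto)
    finally show ?thesis .
  next
    case False then show ?thesis by (simp add: f_def)
  qed
  have "(\<integral>\<^sup>+t. ennreal (indicator {0..} t * t powr (a - 1) * exp (- t) * F0 al (x * t)) \<partial>lborel)
      = (\<integral>\<^sup>+t. (\<Sum>k. f k t) \<partial>lborel)" unfolding pt ..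
  also have "\<dots> = (\<Sum>k. integral\<^sup>N lborel (f k))"
    by (rule nn_integral_suminf) (unfold f_def, measurable)
  also have "\<dots> = (\<Sum>k. ennreal (Gamma (a + real k) * c k))"
  proof (rule suminf_cong)
    fix k
    have "integral\<^sup>N lborel (f k) = (\<integral>\<^sup>+t. ennreal (indicator {0..} t * t powr (a + real k - 1) / exp t) * ennreal (c k) \<partial>lborel)"
      unfolding f_def by (intro nn_integral_cong ennreal_mult) (auto simp: c0)
    also have "\<dots> = (\<integral>\<^sup>+t. ennreal (indicator {0..} t * t powr (a + real k - 1) / exp t) \<partial>lborel) * ennreal (c k)"
      by (rule nn_integral_multc) measurable
    also have "\<dots> = ennreal (Gamma (a + real k)) * ennreal (c k)"
      using Gamma_conv_nn_integral_real[of "a + real k"] a by simp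
    also have "\<dots> = ennreal (Gamma (a + real k) * c k)" by (simp add: ennreal_mult'' c0)
    finally show "integral\<^sup>N lborel (f k) = ennreal (Gamma (a + real k) * c k)" .
  qed
  also have "\<dots> = ennreal (\<Sum>k. Gamma (a + real k) * c k)"
  proof (rule suminf_ennreal2)
    show "0 \<le> Gamma (a + real k) * c k" for k using a c0 by (simp add: Gamma_real_pos less_imp_le)
    have "Gamma (a + real k) * c k = Gamma a * (pochhammer a k / pochhammer al k * x ^ k / fact k)" for k
      using a by (simp add: gp c_def field_simps)
    moreover have "summable (\<lambda>k. Gamma a * (pochhammer a k / pochhammer al k * x ^ k / fact k))"
      by (intro summable_mult summable_norm_cancel[OF summable_M[OF al]])
    ultimately show "summable (\<lambda>k. Gamma (a + real k) * c k)" by simp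
  qed
  also have "(\<Sum>k. Gamma (a + real k) * c k) = Gamma a * kummerM a al x"
  proof -
    have "Gamma (a + real k) * c k = Gamma a * (pochhammer a k / pochhammer al k * x ^ k / fact k)" for k
      using a by (simp add: gp c_def field_simps)
    then have "(\<Sum>k. Gamma (a + real k) * c k) = (\<Sum>k. Gamma a * (pochhammer a k / pochhammer al k * x ^ k / fact k))"
      by presburger
    also have "\<dots> = Gamma a * kummerM a al x" unfolding kummerM_def
      by (rule suminf_mult) (rule summable_norm_cancel[OF summable_M[OF al]])
    finally show ?thesis .
  qed
  finally show ?thesis ..
qed



lemma cosh_series:
  fixes t :: real assumes t: "t \<ge> 0"
  shows "(\<lambda>k. (4 * t) ^ k / fact (2 * k)) sums cosh (2 * sqrt t)"
proof -
  define w where "w = 2 * sqrt t"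
  have "(\<lambda>n. if even n then w ^ n /\<^sub>R fact n else 0) sums cosh w" by (rule cosh_converges)
  then have "(\<lambda>n. (\<lambda>n. if even n then w ^ n /\<^sub>R fact n else 0) (2 * n)) sums cosh w"
    by (subst sums_mono_reindex) (auto simp: strict_mono_def elim!: oddE)
  moreover have "w ^ (2 * n) = (4 * t) ^ n" for n
    unfolding w_def using t by (simp add: power_mult power_mult_distrib)
  ultimately show ?thesis unfolding w_def by (simp add: divide_inverse_commute scaleR_conv_of_real)
qed

lemma cosh_bounds:
  fixes w :: real assumes "w \<ge> 0"
  shows "exp w / 2 \<le> cosh w" "cosh w \<le> exp w"
proof -
  have "exp (- w) \<le> 1" "exp (-w) > 0" "exp w \<ge> 1" using assms by auto
  then show "exp w / 2 \<le> cosh w" "cosh w \<le> exp w" unfolding cosh_def by (auto simp: scaleR_conv_of_real)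
qed

lemma F0_half: assumes "s \<ge> 0" shows "F0 (1/2) s = cosh (2 * sqrt s)"
proof -
  have "s ^ k / (pochhammer (1/2) k * fact k) = (4 * s) ^ k / fact (2 * k)" for k
    by (simp add: fact_double power_mult power_mult_distrib)
  then show ?thesis unfolding F0_def using sums_unique[OF cosh_series[OF assms]] by simp
qed

lemma Gamma_plus_nat:
  fixes x :: real assumes x: "x > 0"
  shows "Gamma (x + real k) = Gamma x * pochhammer x k"
proof -
  have "x \<notin> \<int>\<^sub>\<le>\<^sub>0" using x nonpos_Ints_nonpos by fastforce
  then show ?thesis using pochhammer_Gamma[of x k] Gamma_real_pos[OF x] by simp
qed

lemma beta_nn:
  fixes a b :: real assumes a: "a > 0" and b: "b > 0"
  shows "(\<integral>\<^sup>+v. ennreal (indicator {0..1} v * (v powr (a - 1) * (1 - v) powr (b - 1))) \<partial>lborel)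
     = ennreal (Beta a b)"
  using nn_integral_has_integral_lebesgue[OF _ has_integral_Beta_real[OF a b]] by simp

definition Pint :: "real \<Rightarrow> real \<Rightarrow> real \<Rightarrow> real" where
  "Pint al s v = indicator {0..1} v * cosh (2 * sqrt (s * v)) * v powr (-1/2) * (1 - v) powr (al - 3/2)"

lemma P_eq:
  fixes al s :: real assumes al: "al > 1/2" and s: "s \<ge> 0"
  shows "(\<integral>\<^sup>+v. ennreal (Pint al s v) \<partial>lborel)
     = ennreal (sqrt pi * Gamma (al - 1/2) / Gamma al * F0 al s)"
proof -
  define c where "c k = (4 * s) ^ k / fact (2 * k)" for k :: nat
  have c0: "c k \<ge> 0" for k unfolding c_def using s by simp
  define f where "f k v = ennreal (indicator {0..1} v * (v powr (real k + 1/2 - 1) * (1 - v) powr (al - 1/2 - 1)) * c k)" for k v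
  have pt: "ennreal (Pint al s v) = (\<Sum>k. f k v)" for v
  proof (cases "v \<in> {0..1}")
    case True
    then have v0: "v \<ge> 0" and v1: "v \<le> 1" by auto
    have eq: "indicator {0..1} v * (c k * v ^ k) * v powr (-1/2) * (1 - v) powr (al - 3/2)
        = indicator {0..1} v * (v powr (real k + 1/2 - 1) * (1 - v) powr (al - 1/2 - 1)) * c k" for k
    proof (cases "v = 0")
      case True then show ?thesis by simp
    next
      case False
      then have vp: "v > 0" using v0 by simp
      have "v powr (real k + 1/2 - 1) = v ^ k * v powr (-1/2)"
        using vp by (simp add: powr_add[symmetric] powr_realpow[symmetric] algebra_simps)
      then show ?thesis by (simp add: algebra_simps)
    qed
    have cs: "(\<lambda>k. c k * v ^ k) sums cosh (2 * sqrt (s * v))"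
    proof -
      have "(\<lambda>k. (4 * (s * v)) ^ k / fact (2 * k)) sums cosh (2 * sqrt (s * v))"
        by (rule cosh_series) (use s v0 in simp)
      then show ?thesis unfolding c_def by (simp add: power_mult_distrib algebra_simps)
    qed
    define g where "g k = indicator {0..1} v * (v powr (real k + 1/2 - 1) * (1 - v) powr (al - 1/2 - 1)) * c k" for k
    have gs: "g sums Pint al s v"
    proof -
      have "(\<lambda>k. indicator {0..1} v * (c k * v ^ k) * v powr (-1/2) * (1 - v) powr (al - 3/2)) sums
          (indicator {0..1} v * cosh (2 * sqrt (s * v)) * v powr (-1/2) * (1 - v) powr (al - 3/2))"
        by (intro sums_mult sums_mult2 cs)
      then show ?thesis unfolding Pint_def g_def eq .
    qed
    have g0: "g k \<ge> 0" for k unfolding g_def using c0 by simp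
    have "ennreal (Pint al s v) = ennreal (\<Sum>k. g k)" using sums_unique[OF gs] by simp
    also have "\<dots> = (\<Sum>k. ennreal (g k))" by (rule suminf_ennreal2[symmetric]) (use g0 gs in \<open>auto simp: sums_iff\<close>)
    finally show ?thesis unfolding f_def g_def .
  next
    case False then show ?thesis by (simp add: f_def Pint_def)
  qed
  have "(\<integral>\<^sup>+v. ennreal (Pint al s v) \<partial>lborel) = (\<integral>\<^sup>+v. (\<Sum>k. f k v) \<partial>lborel)" unfolding pt ..
  also have "\<dots> = (\<Sum>k. integral\<^sup>N lborel (f k))"
    by (rule nn_integral_suminf) (unfold f_def, measurable)
  also have "\<dots> = (\<Sum>k. ennreal (sqrt pi * Gamma (al - 1/2) / Gamma al * (s ^ k / (pochhammer al k * fact k))))"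
  proof (rule suminf_cong)
    fix k
    have "integral\<^sup>N lborel (f k) = (\<integral>\<^sup>+v. ennreal (indicator {0..1} v * (v powr (real k + 1/2 - 1) * (1 - v) powr (al - 1/2 - 1))) * ennreal (c k) \<partial>lborel)"
      unfolding f_def by (intro nn_integral_cong ennreal_mult) (auto simp: c0)
    also have "\<dots> = (\<integral>\<^sup>+v. ennreal (indicator {0..1} v * (v powr (real k + 1/2 - 1) * (1 - v) powr (al - 1/2 - 1))) \<partial>lborel) * ennreal (c k)"
      by (rule nn_integral_multc) measurable
    also have "\<dots> = ennreal (Beta (real k + 1/2) (al - 1/2)) * ennreal (c k)"
      by (subst beta_nn) (use al in auto)
    also have "\<dots> = ennreal (Beta (real k + 1/2) (al - 1/2) * c k)"
      by (rule ennreal_mult[symmetric]) (use c0 al in \<open>auto simp: Beta_def Gamma_real_pos less_imp_le\<close>)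
    also have "Beta (real k + 1/2) (al - 1/2) * c k = sqrt pi * Gamma (al - 1/2) / Gamma al * (s ^ k / (pochhammer al k * fact k))"
    proof -
      have g1: "Gamma (1/2 + real k) = sqrt pi * pochhammer (1/2) k"
        using Gamma_plus_nat[of "1/2" k] by (simp add: Gamma_one_half_real)
      have g2: "Gamma (al + real k) = Gamma al * pochhammer al k"
        using Gamma_plus_nat[of al k] al by simp
      have "real k + 1/2 + (al - 1/2) = al + real k" by simp
      then have "Beta (real k + 1/2) (al - 1/2) = sqrt pi * pochhammer (1/2) k * Gamma (al - 1/2) / (Gamma al * pochhammer al k)"
        unfolding Beta_def using g1 g2 by (simp add: add.commute)
      moreover have "pochhammer al k > 0" "Gamma al > 0" using al by (auto intro: pochhammer_pos Gamma_real_pos)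
      moreover have fd: "fact (2 * k) = (4::real) ^ k * pochhammer (1/2) k * fact k"
        by (simp add: fact_double power_mult)
      moreover have "pochhammer (1/2::real) k > 0" by (intro pochhammer_pos) simp
      ultimately show ?thesis unfolding c_def fd by (simp add: power_mult_distrib field_simps)
    qed
    finally show "integral\<^sup>N lborel (f k) = ennreal (sqrt pi * Gamma (al - 1/2) / Gamma al * (s ^ k / (pochhammer al k * fact k)))" .
  qed
  also have "\<dots> = ennreal (\<Sum>k. sqrt pi * Gamma (al - 1/2) / Gamma al * (s ^ k / (pochhammer al k * fact k)))"
  proof (rule suminf_ennreal2)
    have al0: "al > 0" using al by simp
    show "0 \<le> sqrt pi * Gamma (al - 1/2) / Gamma al * (s ^ k / (pochhammer al k * fact k))" for k
      using al s pochhammer_pos[OF al0, of k] by (auto intro!: mult_nonneg_nonneg divide_nonneg_pos Gamma_real_pos less_imp_le)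
    show "summable (\<lambda>k. sqrt pi * Gamma (al - 1/2) / Gamma al * (s ^ k / (pochhammer al k * fact k)))"
      by (intro summable_mult summable_F0 s) (use al in simp)
  qed
  also have "(\<Sum>k. sqrt pi * Gamma (al - 1/2) / Gamma al * (s ^ k / (pochhammer al k * fact k)))
      = sqrt pi * Gamma (al - 1/2) / Gamma al * F0 al s"
    unfolding F0_def by (rule suminf_mult) (intro summable_F0 s, use al in simp)
  finally show ?thesis .
qed

lemma sqrt_ge_self: "0 \<le> v \<Longrightarrow> v \<le> 1 \<Longrightarrow> v \<le> sqrt (v::real)"
proof -
  assume v: "0 \<le> v" "v \<le> 1"
  then have "sqrt v \<le> 1" by simp
  then have "sqrt v * sqrt v \<le> sqrt v * 1" using v by (intro mult_left_mono) auto
  then show ?thesis using v by simp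
qed

lemma sqrt_le_avg: "0 \<le> v \<Longrightarrow> sqrt (v::real) \<le> (1 + v) / 2"
proof -
  assume v: "0 \<le> v"
  have "0 \<le> (sqrt v - 1)^2" by simp
  also have "\<dots> = v - 2 * sqrt v + 1" using v by (simp add: power2_eq_square algebra_simps)
  finally show ?thesis by simp
qed

lemma P_lower:
  fixes al s :: real assumes al: "al > 1/2" "al < 1" and s: "s \<ge> 1"
  defines "w \<equiv> 2 * sqrt s"
  shows "ennreal (exp (w - 1) / 2 * (1 / w) powr (al - 1/2)) \<le> (\<integral>\<^sup>+v. ennreal (Pint al s v) \<partial>lborel)"
proof -
  have w2: "w \<ge> 2" unfolding w_def using s by simp
  define d where "d = 1 / w"
  have d0: "d > 0" and d2: "d \<le> 1/2" unfolding d_def using w2 by (auto simp: field_simps)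
  define L where "L = exp (w - 1) / 2 * d powr (al - 3/2)"
  have L0: "L \<ge> 0" unfolding L_def by simp
  have pw: "ennreal L * indicator {1 - d..<1} v \<le> ennreal (Pint al s v)" for v
  proof (cases "v \<in> {1 - d..<1}")
    case True
    then have v1: "1 - d \<le> v" "v < 1" by auto
    have v0: "v > 0" using v1 d2 by simp
    have "2 * sqrt (s * v) = w * sqrt v" unfolding w_def by (simp add: real_sqrt_mult)
    also have "w * sqrt v \<ge> w * v" using sqrt_ge_self[of v] v0 v1 w2 by (intro mult_left_mono) auto
    finally have f1: "2 * sqrt (s * v) \<ge> w * v" .
    have f2: "w * v \<ge> w - 1"
    proof -
      have "w * v \<ge> w * (1 - d)" using v1 w2 by (intro mult_left_mono) auto
      also have "w * (1 - d) = w - 1" unfolding d_def using w2 by (simp add: field_simps)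
      finally show ?thesis .
    qed
    have e1: "exp (w - 1) / 2 \<le> cosh (2 * sqrt (s * v))"
    proof -
      have "exp (w - 1) \<le> exp (2 * sqrt (s * v))" using f1 f2 by simp
      moreover have "exp (2 * sqrt (s * v)) / 2 \<le> cosh (2 * sqrt (s * v))" by (rule cosh_bounds(1)) (use s v0 in simp)
      ultimately show ?thesis by linarith
    qed
    have e2: "1 \<le> v powr (-1/2)"
    proof -
      have "v powr (1/2) \<le> 1" using v0 v1 by (simp add: powr_half_sqrt)
      moreover have "v powr (1/2) > 0" using v0 by simp
      ultimately show ?thesis by (simp add: powr_minus_divide[of v "1/2", simplified])
    qed
    have e3: "d powr (al - 3/2) \<le> (1 - v) powr (al - 3/2)"
      by (rule powr_mono2') (use al v1 in auto)
    have "L = (exp (w - 1) / 2) * 1 * d powr (al - 3/2)" unfolding L_def by simp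
    also have "\<dots> \<le> cosh (2 * sqrt (s * v)) * v powr (-1/2) * (1 - v) powr (al - 3/2)"
      using e1 e2 e3 by (intro mult_mono) auto
    finally have "L \<le> Pint al s v" unfolding Pint_def using v0 v1 by simp
    then show ?thesis using True by (simp add: ennreal_leI)
  next
    case False then show ?thesis by simp
  qed
  have "(\<integral>\<^sup>+v. ennreal (Pint al s v) \<partial>lborel) \<ge> (\<integral>\<^sup>+v. ennreal L * indicator {1 - d..<1} v \<partial>lborel)"
    by (intro nn_integral_mono pw)
  also have "(\<integral>\<^sup>+v. ennreal L * indicator {1 - d..<1} v \<partial>lborel) = ennreal L * ennreal d"
    using d0 by (subst nn_integral_cmult_indicator) auto
  also have "ennreal L * ennreal d = ennreal (exp (w - 1) / 2 * (1 / w) powr (al - 1/2))"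
  proof -
    have "d powr (al - 3/2) * d = d powr (al - 1/2)"
      using d0 powr_add[of d "al - 3/2" 1] by simp
    then show ?thesis unfolding L_def d_def[symmetric] using d0 by (simp add: ennreal_mult''[symmetric] mult.assoc)
  qed
  finally show ?thesis .
qed

lemma gamma_scaled:
  fixes p lam :: real assumes p: "p > 0" and lam: "lam > 0"
  shows "(\<integral>\<^sup>+r. ennreal (indicator {0..} r * exp (- (lam * r)) * r powr (p - 1)) \<partial>lborel)
      = ennreal (lam powr (- p) * Gamma p)"
proof -
  have "(\<integral>\<^sup>+r. ennreal (indicator {0..} r * exp (- (lam * r)) * r powr (p - 1)) \<partial>lborel)
      = \<bar>1 / lam\<bar> * (\<integral>\<^sup>+x. ennreal (indicator {0..} (0 + 1 / lam * x) * exp (- (lam * (0 + 1 / lam * x))) * (0 + 1 / lam * x) powr (p - 1)) \<partial>lborel)"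
    by (rule nn_integral_real_affine) (use lam in auto)
  also have "(\<lambda>x. ennreal (indicator {0..} (0 + 1 / lam * x) * exp (- (lam * (0 + 1 / lam * x))) * (0 + 1 / lam * x) powr (p - 1)))
      = (\<lambda>x. ennreal (lam powr (1 - p)) * ennreal (indicator {0..} x * x powr (p - 1) / exp x))"
  proof
    fix x
    show "ennreal (indicator {0..} (0 + 1 / lam * x) * exp (- (lam * (0 + 1 / lam * x))) * (0 + 1 / lam * x) powr (p - 1))
      = ennreal (lam powr (1 - p)) * ennreal (indicator {0..} x * x powr (p - 1) / exp x)"
    proof (cases "x \<ge> 0")
      case True
      have "(1 / lam * x) powr (p - 1) = lam powr (1 - p) * x powr (p - 1)"
        using lam True by (simp add: powr_divide powr_minus_divide[symmetric] powr_diff divide_simps)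
      then show ?thesis using True lam
        by (simp add: ennreal_mult''[symmetric] exp_minus field_simps)
    next
      case False
      then have "\<not> (0 \<le> 1 / lam * x)" using lam by (simp add: zero_le_divide_iff)
      then show ?thesis using False by simp
    qed
  qed
  also have "(\<integral>\<^sup>+x. ennreal (lam powr (1 - p)) * ennreal (indicator {0..} x * x powr (p - 1) / exp x) \<partial>lborel)
      = ennreal (lam powr (1 - p)) * ennreal (Gamma p)"
    by (subst nn_integral_cmult) (use Gamma_conv_nn_integral_real[OF p] in auto)
  also have "\<bar>1 / lam\<bar> * (ennreal (lam powr (1 - p)) * ennreal (Gamma p)) = ennreal (lam powr (- p) * Gamma p)"
  proof -
    have "\<bar>1 / lam\<bar> * lam powr (1 - p) = lam powr (- p)"
      using lam by (simp add: powr_diff powr_minus_divide)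
    moreover have "Gamma p > 0" using p by (rule Gamma_real_pos)
    ultimately show ?thesis using lam
      by (simp add: ennreal_mult''[symmetric] ennreal_mult[symmetric] mult.assoc[symmetric] del: ennreal_mult)
  qed
  finally show ?thesis .
qed

lemma nn_reflect:
  fixes f :: "real \<Rightarrow> ennreal" assumes [measurable]: "f \<in> borel_measurable borel"
  shows "(\<integral>\<^sup>+v. f (1 - v) \<partial>lborel) = (\<integral>\<^sup>+v. f v \<partial>lborel)"
  using nn_integral_real_affine[OF assms, of "-1" 1] by simp

lemma exp_powr_bound:
  fixes w p :: real assumes w: "w > 0" and p: "0 < p" "p < 1"
  shows "exp (3 * w / 4) \<le> 4 * exp w * w powr (- p)"
proof -
  have "w powr p \<le> 1 + w"
  proof (cases "w \<le> 1")
    case True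
    then have "w powr p \<le> 1" using w p by (intro powr_le1) auto
    then show ?thesis using w by simp
  next
    case False
    then have "w powr p \<le> w powr 1" using p by (intro powr_mono) auto
    then show ?thesis using w by simp
  qed
  also have "1 + w \<le> 4 * exp (w / 4)"
    using exp_ge_add_one_self[of "w / 4"] by linarith
  finally have a: "w powr p \<le> 4 * exp (w / 4)" .
  have "exp (3 * w / 4) * w powr p = exp w * (w powr p * exp (- (w / 4)))"
    by (simp add: exp_add[symmetric] mult_ac)
  also have "\<dots> \<le> exp w * 4"
  proof -
    have "w powr p * exp (- (w / 4)) \<le> 4 * exp (w / 4) * exp (- (w / 4))"
      using a by (intro mult_right_mono) auto
    also have "\<dots> = 4" by (simp add: exp_minus)
    finally show ?thesis by simp
  qed
  finally have "exp (3 * w / 4) * w powr p \<le> 4 * exp w" by simp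
  moreover have "w powr p > 0" using w by simp
  ultimately show ?thesis using w by (simp add: powr_minus_divide field_simps)
qed

lemma P_upper:
  fixes al s :: real assumes al: "al > 1/2" "al < 1" and s: "s > 0"
  defines "w \<equiv> 2 * sqrt s"
  shows "(\<integral>\<^sup>+v. ennreal (Pint al s v) \<partial>lborel) \<le>
    ennreal (exp w * w powr (1/2 - al) * (4 * Beta (1/2) (al - 1/2) + sqrt 2 * 2 powr (al - 1/2) * Gamma (al - 1/2)))"
proof -
  have w0: "w > 0" unfolding w_def using s by simp
  define Bf where "Bf v = indicator {0..1} v * (v powr (1/2 - 1) * (1 - v) powr (al - 1/2 - 1))" for v :: real
  define g where "g r = indicator {0..} r * exp (- ((w / 2) * r)) * r powr (al - 1/2 - 1)" for r :: real
  have Bf0: "Bf v \<ge> 0" for v unfolding Bf_def by simp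
  have g0: "g r \<ge> 0" for r unfolding g_def by simp
  have pw: "Pint al s v \<le> exp (3 * w / 4) * Bf v + sqrt 2 * exp w * g (1 - v)" for v
  proof (cases "0 < v \<and> v < 1")
    case False
    then have "Pint al s v = 0" unfolding Pint_def by (cases "v = 0 \<or> v = 1") auto
    then show ?thesis using Bf0 g0 by simp
  next
    case True
    then have v0: "0 < v" and v1: "v < 1" by auto
    have c1: "cosh (2 * sqrt (s * v)) \<le> exp (w * ((1 + v) / 2))"
    proof -
      have a: "cosh (2 * sqrt (s * v)) \<le> exp (2 * sqrt (s * v))" by (rule cosh_bounds(2)) (use s v0 in simp)
      have b: "2 * sqrt (s * v) = w * sqrt v" unfolding w_def by (simp add: real_sqrt_mult)
      have "exp (w * sqrt v) \<le> exp (w * ((1 + v) / 2))"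
        using sqrt_le_avg[of v] v0 w0 by (simp add: mult_left_mono)
      then show ?thesis using a unfolding b by linarith
    qed
    have P: "Pint al s v = cosh (2 * sqrt (s * v)) * v powr (-1/2) * (1 - v) powr (al - 3/2)"
      unfolding Pint_def using v0 v1 by simp
    show ?thesis
    proof (cases "v < 1/2")
      case True
      have "exp (w * ((1 + v) / 2)) \<le> exp (3 * w / 4)" using True w0 by (simp add: field_simps)
      then have "cosh (2 * sqrt (s * v)) \<le> exp (3 * w / 4)" using c1 by linarith
      then have "Pint al s v \<le> exp (3 * w / 4) * (v powr (-1/2) * (1 - v) powr (al - 3/2))"
        unfolding P by (simp add: mult.assoc mult_right_mono)
      also have "\<dots> = exp (3 * w / 4) * Bf v" unfolding Bf_def using v0 v1 by simp
      moreover have "sqrt 2 * exp w * g (1 - v) \<ge> 0" using g0[of "1 - v"] by simp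
      ultimately show ?thesis by linarith
    next
      case False
      have vs: "v powr (-1/2) \<le> sqrt 2"
      proof -
        have "v powr (-1/2) = 1 / sqrt v" using v0 by (simp add: powr_minus_divide powr_half_sqrt)
        also have "\<dots> \<le> 1 / sqrt (1/2)" using False v0 by (intro divide_left_mono) auto
        also have "1 / sqrt (1/2) = sqrt (2::real)" by (simp add: real_sqrt_divide)
        finally show ?thesis .
      qed
      have ex: "exp (w * ((1 + v) / 2)) = exp w * exp (- ((w / 2) * (1 - v)))"
      proof -
        have "w * ((1 + v) / 2) = w + - ((w / 2) * (1 - v))" by (simp add: field_simps)
        then show ?thesis by (simp only: exp_add)
      qed
      have "Pint al s v \<le> exp (w * ((1 + v) / 2)) * sqrt 2 * (1 - v) powr (al - 3/2)"
        unfolding P using c1 vs by (intro mult_mono mult_right_mono) auto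
      also have "\<dots> = sqrt 2 * exp w * g (1 - v)" unfolding g_def ex using v1 by simp
      moreover have "exp (3 * w / 4) * Bf v \<ge> 0" using Bf0[of v] by simp
      ultimately show ?thesis by linarith
    qed
  qed
  have "(\<integral>\<^sup>+v. ennreal (Pint al s v) \<partial>lborel) \<le>
      (\<integral>\<^sup>+v. ennreal (exp (3 * w / 4)) * ennreal (Bf v) + ennreal (sqrt 2 * exp w) * ennreal (g (1 - v)) \<partial>lborel)"
  proof (rule nn_integral_mono)
    fix v
    have "ennreal (Pint al s v) \<le> ennreal (exp (3 * w / 4) * Bf v + sqrt 2 * exp w * g (1 - v))"
      using pw by (rule ennreal_leI)
    also have "\<dots> = ennreal (exp (3 * w / 4)) * ennreal (Bf v) + ennreal (sqrt 2 * exp w) * ennreal (g (1 - v))"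
      using Bf0[of v] g0[of "1 - v"] by (simp add: ennreal_plus[symmetric] ennreal_mult''[symmetric] del: ennreal_plus)
    finally show "ennreal (Pint al s v) \<le> ennreal (exp (3 * w / 4)) * ennreal (Bf v) + ennreal (sqrt 2 * exp w) * ennreal (g (1 - v))" .
  qed
  also have "\<dots> = ennreal (exp (3 * w / 4)) * (\<integral>\<^sup>+v. ennreal (Bf v) \<partial>lborel) + ennreal (sqrt 2 * exp w) * (\<integral>\<^sup>+v. ennreal (g (1 - v)) \<partial>lborel)"
    by (subst nn_integral_add) (auto simp: Bf_def g_def nn_integral_cmult)
  also have "(\<integral>\<^sup>+v. ennreal (Bf v) \<partial>lborel) = ennreal (Beta (1/2) (al - 1/2))"
    unfolding Bf_def by (rule beta_nn) (use al in auto)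
  also have "(\<integral>\<^sup>+v. ennreal (g (1 - v)) \<partial>lborel) = (\<integral>\<^sup>+v. ennreal (g v) \<partial>lborel)"
    by (rule nn_reflect) (unfold g_def, measurable)
  also have "(\<integral>\<^sup>+v. ennreal (g v) \<partial>lborel) = ennreal ((w / 2) powr (- (al - 1/2)) * Gamma (al - 1/2))"
    unfolding g_def by (rule gamma_scaled) (use al w0 in auto)
  also have "ennreal (exp (3 * w / 4)) * ennreal (Beta (1/2) (al - 1/2)) + ennreal (sqrt 2 * exp w) * ennreal ((w / 2) powr (- (al - 1/2)) * Gamma (al - 1/2))
     = ennreal (exp (3 * w / 4) * Beta (1/2) (al - 1/2) + sqrt 2 * exp w * ((w / 2) powr (- (al - 1/2)) * Gamma (al - 1/2)))"
  proof -
    have "Beta (1/2) (al - 1/2) > 0" "Gamma (al - 1/2) > 0" using al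
      by (auto simp: Beta_def intro!: Gamma_real_pos divide_pos_pos mult_pos_pos)
    then show ?thesis by (simp add: ennreal_plus[symmetric] ennreal_mult''[symmetric] del: ennreal_plus)
  qed
  also have "\<dots> \<le> ennreal (exp w * w powr (1/2 - al) * (4 * Beta (1/2) (al - 1/2) + sqrt 2 * 2 powr (al - 1/2) * Gamma (al - 1/2)))"
  proof (rule ennreal_leI)
    have B0: "Beta (1/2) (al - 1/2) > 0" "Gamma (al - 1/2) > 0" using al
      by (auto simp: Beta_def intro!: Gamma_real_pos divide_pos_pos mult_pos_pos)
    have e: "exp (3 * w / 4) \<le> 4 * exp w * w powr (1/2 - al)"
      using exp_powr_bound[OF w0, of "al - 1/2"] al by simp
    have q: "(w / 2) powr (- (al - 1/2)) = 2 powr (al - 1/2) * w powr (1/2 - al)"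
    proof -
      have m: "- (al - 1/2) = 1/2 - al" by simp
      have "(w / 2) powr (- (al - 1/2)) = w powr (- (al - 1/2)) / 2 powr (- (al - 1/2))"
        using w0 by (simp add: powr_divide)
      also have "\<dots> = w powr (1/2 - al) * 2 powr (al - 1/2)"
        unfolding m by (simp add: powr_minus_divide[of 2 "al - 1/2", unfolded m])
      finally show ?thesis by simp
    qed
    have "exp (3 * w / 4) * Beta (1/2) (al - 1/2) \<le> 4 * exp w * w powr (1/2 - al) * Beta (1/2) (al - 1/2)"
      using e B0 by (intro mult_right_mono) auto
    then show "exp (3 * w / 4) * Beta (1/2) (al - 1/2) + sqrt 2 * exp w * ((w / 2) powr (- (al - 1/2)) * Gamma (al - 1/2))
      \<le> exp w * w powr (1/2 - al) * (4 * Beta (1/2) (al - 1/2) + sqrt 2 * 2 powr (al - 1/2) * Gamma (al - 1/2))"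
      unfolding q by (simp add: algebra_simps)
  qed
  finally show ?thesis .
qed

definition hh :: "real \<Rightarrow> real \<Rightarrow> real" where
  "hh al s = s powr ((1 - 2 * al) / 4) * exp (2 * sqrt s)"

lemma w_powr:
  fixes s q :: real assumes s: "s > 0"
  shows "(2 * sqrt s) powr q = 2 powr q * s powr (q / 2)"
proof -
  have "(2 * sqrt s) powr q = 2 powr q * sqrt s powr q" by (simp add: powr_mult)
  also have "sqrt s powr q = s powr (q / 2)"
    using s by (simp add: powr_half_sqrt[symmetric] powr_powr)
  finally show ?thesis .
qed

lemma F0_bounds:
  fixes al :: real assumes al: "1/2 \<le> al" "al < 1"
  shows "\<exists>c>0. \<exists>C>0. (\<forall>s\<ge>1. c * hh al s \<le> F0 al s) \<and> (\<forall>s>0. F0 al s \<le> C * hh al s)"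
proof (cases "al = 1/2")
  case True
  have h: "hh al s = exp (2 * sqrt s)" if "s > 0" for s
    unfolding hh_def True using that by simp
  have hF: "F0 al s = cosh (2 * sqrt s)" if "s \<ge> 0" for s
    unfolding True using F0_half[OF that] .
  have l: "1/2 * hh al s \<le> F0 al s" if "s \<ge> 1" for s
    using that h[of s] cosh_bounds(1)[of "2 * sqrt s"] hF[of s] by simp
  have u: "F0 al s \<le> 1 * hh al s" if "s > 0" for s
    using that h[of s] cosh_bounds(2)[of "2 * sqrt s"] hF[of s] by simp
  have "(1/2::real) > 0" "(1::real) > 0" by auto
  then show ?thesis using l u by blast
next
  case False
  then have al1: "al > 1/2" using al by simp
  define p where "p = al - 1/2"
  have p0: "p > 0" unfolding p_def using al1 by simp
  define K where "K = sqrt pi * Gamma (al - 1/2) / Gamma al"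
  have K0: "K > 0" unfolding K_def using al1 by (auto intro!: Gamma_real_pos divide_pos_pos mult_pos_pos)
  define D where "D = 4 * Beta (1/2) (al - 1/2) + sqrt 2 * 2 powr (al - 1/2) * Gamma (al - 1/2)"
  have D0: "D > 0" unfolding D_def using al1
    by (auto simp: Beta_def intro!: add_pos_pos Gamma_real_pos divide_pos_pos mult_pos_pos)
  have hw: "hh al s = s powr (- p / 2) * exp (2 * sqrt s)" for s
  proof -
    have "(1 - 2 * al) / 4 = - p / 2" unfolding p_def by (simp add: field_simps)
    then show ?thesis unfolding hh_def by simp
  qed
  have KF: "ennreal (K * F0 al s) = (\<integral>\<^sup>+v. ennreal (Pint al s v) \<partial>lborel)" if "s \<ge> 0" for s
    unfolding K_def using P_eq[OF al1 that] by simp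
  have KF0: "K * F0 al s \<ge> 0" if "s \<ge> 0" for s
    using K0 F0_nonneg[of al s] al1 that by simp
  show ?thesis
  proof (rule exI[of _ "exp (-1) / 2 * 2 powr (- p) / K"], intro conjI exI[of _ "D * 2 powr (- p) / K"] allI impI)
    fix s :: real assume s: "s \<ge> 1"
    have "ennreal (exp (2 * sqrt s - 1) / 2 * (1 / (2 * sqrt s)) powr (al - 1/2)) \<le> ennreal (K * F0 al s)"
      using P_lower[OF al1 al(2) s] KF[of s] s by simp
    then have le: "exp (2 * sqrt s - 1) / 2 * (1 / (2 * sqrt s)) powr p \<le> K * F0 al s"
      using KF0[of s] s unfolding p_def by (simp add: ennreal_le_iff)
    have "(1 / (2 * sqrt s)) powr p = (2 * sqrt s) powr (- p)"
      using s by (simp add: powr_divide powr_minus_divide)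
    also have "\<dots> = 2 powr (- p) * s powr (- p / 2)" using s by (simp add: w_powr)
    finally have "exp (2 * sqrt s - 1) / 2 * (1 / (2 * sqrt s)) powr p = (exp (-1) / 2 * 2 powr (- p)) * hh al s"
      unfolding hw by (simp add: exp_diff exp_minus field_simps)
    then have "(exp (-1) / 2 * 2 powr (- p)) * hh al s \<le> K * F0 al s" using le by (simp only:)
    then show "exp (-1) / 2 * 2 powr (- p) / K * hh al s \<le> F0 al s"
      using K0 by (simp add: field_simps)
  next
    fix s :: real assume s: "s > 0"
    have "ennreal (K * F0 al s) \<le> ennreal (exp (2 * sqrt s) * (2 * sqrt s) powr (1/2 - al) * D)"
      using P_upper[OF al1 al(2) s] KF[of s] s unfolding D_def by simp
    then have le: "K * F0 al s \<le> exp (2 * sqrt s) * (2 * sqrt s) powr (- p) * D"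
      unfolding p_def using D0 s by (simp add: ennreal_le_iff)
    have "(2 * sqrt s) powr (- p) = 2 powr (- p) * s powr (- p / 2)" using s by (simp add: w_powr)
    then have "exp (2 * sqrt s) * (2 * sqrt s) powr (- p) * D = (D * 2 powr (- p)) * hh al s"
      unfolding hw by (simp add: field_simps)
    then have "K * F0 al s \<le> (D * 2 powr (- p)) * hh al s" using le by (simp only:)
    then show "F0 al s \<le> D * 2 powr (- p) / K * hh al s"
      using K0 by (simp add: field_simps)
  qed (use K0 D0 in auto)
qed

lemma ennreal_ind_mono:
  fixes c :: real assumes "A \<subseteq> B"
  shows "ennreal (c * indicator A x) \<le> ennreal (c * indicator B x)"
  using assms by (cases "x \<in> A"; cases "x \<in> B") (auto simp: ennreal_neg)

lemma sq_subst:
  fixes f :: "real \<Rightarrow> real" and T :: real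
  assumes [measurable]: "f \<in> borel_measurable borel" and T: "T \<ge> 0"
  shows "(\<integral>\<^sup>+t. ennreal (f t * indicator {T..} t) \<partial>lborel)
       = (\<integral>\<^sup>+u. ennreal (f (u\<^sup>2) * (2 * u) * indicator {sqrt T..} u) \<partial>lborel)"
proof -
  define L where "L n = (\<integral>\<^sup>+t. ennreal (f t * indicator {T..(sqrt T + real n)\<^sup>2} t) \<partial>lborel)" for n :: nat
  define R where "R n = (\<integral>\<^sup>+u. ennreal (f (u\<^sup>2) * (2 * u) * indicator {sqrt T..sqrt T + real n} u) \<partial>lborel)" for n :: nat
  have sbm: "set_borel_measurable borel S f" if "S \<in> sets borel" for S
    unfolding set_borel_measurable_def using that by measurable
  have LR: "L n = R n" for n
  proof -
    have "L n = (\<integral>\<^sup>+t. ennreal (f t * indicator {(\<lambda>u. u\<^sup>2) (sqrt T)..(\<lambda>u. u\<^sup>2) (sqrt T + real n)} t) \<partial>lborel)"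
      unfolding L_def using T by simp
    also have "\<dots> = (\<integral>\<^sup>+u. ennreal (f ((\<lambda>u. u\<^sup>2) u) * (2 * u) * indicator {sqrt T..sqrt T + real n} u) \<partial>lborel)"
      by (rule nn_integral_substitution[where g' = "\<lambda>u. 2 * u"])
         (auto intro!: derivative_eq_intros continuous_intros sbm simp: T intro: order_trans[OF real_sqrt_ge_zero[OF T]])
    finally show ?thesis unfolding R_def by simp
  qed
  have "L \<longlonglongrightarrow> (\<integral>\<^sup>+t. ennreal (f t * indicator {T..} t) \<partial>lborel)"
    unfolding L_def
  proof (rule nn_integral_LIMSEQ)
    show "incseq (\<lambda>n t. ennreal (f t * indicator {T..(sqrt T + real n)\<^sup>2} t))"
    proof (intro incseq_SucI le_funI ennreal_ind_mono)
      fix n :: nat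
      have "(sqrt T + real n)\<^sup>2 \<le> (sqrt T + real (Suc n))\<^sup>2" using T by (intro power_mono) auto
      then show "{T..(sqrt T + real n)\<^sup>2} \<subseteq> {T..(sqrt T + real (Suc n))\<^sup>2}" by auto
    qed
    fix t
    show "(\<lambda>n. ennreal (f t * indicator {T..(sqrt T + real n)\<^sup>2} t)) \<longlonglongrightarrow> ennreal (f t * indicator {T..} t)"
    proof (rule tendsto_eventually, rule eventually_sequentiallyI[of "nat \<lceil>\<bar>t\<bar>\<rceil> + 1"])
      fix n :: nat assume n: "nat \<lceil>\<bar>t\<bar>\<rceil> + 1 \<le> n"
      then have n1: "real n \<ge> 1" "real n \<ge> \<bar>t\<bar>" by linarith+
      have "t \<le> real n" using n1 by simp
      also have "real n \<le> real n * real n" using n1 by simp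
      also have "\<dots> \<le> (sqrt T + real n)\<^sup>2" using T by (simp add: power2_eq_square algebra_simps)
      finally have "t \<le> (sqrt T + real n)\<^sup>2" .
      then show "ennreal (f t * indicator {T..(sqrt T + real n)\<^sup>2} t) = ennreal (f t * indicator {T..} t)"
        by (cases "T \<le> t") auto
    qed
  qed measurable
  moreover have "R \<longlonglongrightarrow> (\<integral>\<^sup>+u. ennreal (f (u\<^sup>2) * (2 * u) * indicator {sqrt T..} u) \<partial>lborel)"
    unfolding R_def
  proof (rule nn_integral_LIMSEQ)
    show "incseq (\<lambda>n u. ennreal (f (u\<^sup>2) * (2 * u) * indicator {sqrt T..sqrt T + real n} u))"
      by (intro incseq_SucI le_funI ennreal_ind_mono) auto
    fix u
    show "(\<lambda>n. ennreal (f (u\<^sup>2) * (2 * u) * indicator {sqrt T..sqrt T + real n} u)) \<longlonglongrightarrow> ennreal (f (u\<^sup>2) * (2 * u) * indicator {sqrt T..} u)"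
    proof (rule tendsto_eventually, rule eventually_sequentiallyI[of "nat \<lceil>\<bar>u\<bar>\<rceil>"])
      fix n :: nat assume n: "nat \<lceil>\<bar>u\<bar>\<rceil> \<le> n"
      then have "u \<le> sqrt T + real n" using T by (smt (verit) of_nat_le_iff real_nat_ceiling_ge real_sqrt_ge_zero)
      then show "ennreal (f (u\<^sup>2) * (2 * u) * indicator {sqrt T..sqrt T + real n} u) = ennreal (f (u\<^sup>2) * (2 * u) * indicator {sqrt T..} u)"
        by (cases "sqrt T \<le> u") auto
    qed
  qed measurable
  ultimately show ?thesis using LR LIMSEQ_unique by (metis (no_types, lifting) ext)
qed

lemma set_int_nn:
  fixes g :: "real \<Rightarrow> real" and S :: "real set"
  assumes [measurable]: "g \<in> borel_measurable borel" "S \<in> sets borel"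
    and nn: "\<And>u. u \<in> S \<Longrightarrow> g u \<ge> 0"
    and fin: "(\<integral>\<^sup>+u. ennreal (indicator S u * g u) \<partial>lborel) < \<infinity>"
  shows "ennreal (LBINT u:S. g u) = (\<integral>\<^sup>+u. ennreal (indicator S u * g u) \<partial>lborel)"
proof -
  have nn': "0 \<le> indicator S u * g u" for u using nn by (cases "u \<in> S") auto
  have int: "integrable lborel (\<lambda>u. indicator S u * g u)"
    by (rule integrableI_nonneg) (use nn' fin in auto)
  have "(\<integral>\<^sup>+u. ennreal (indicator S u * g u) \<partial>lborel) = ennreal (integral\<^sup>L lborel (\<lambda>u. indicator S u * g u))"
    by (rule nn_integral_eq_integral[OF int]) (use nn' in auto)
  then show ?thesis unfolding set_lebesgue_integral_def by simp
qed

lemma exp_G: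
  fixes al b y u :: real assumes u: "u > 0"
  shows "exp (kummerG al b y u) = exp (- (u\<^sup>2) + 2 * sqrt (- y) * u) * u powr (al - 2 * b - 1/2)"
  unfolding kummerG_def using u by (simp add: exp_add powr_def)

lemma f_formula:
  fixes al b x u :: real assumes u: "u > 0" and x: "x > 0"
  shows "(u\<^sup>2) powr (al - b - 1) * exp (- (u\<^sup>2)) * hh al (x * u\<^sup>2) * (2 * u)
    = 2 * x powr ((1 - 2 * al) / 4) * exp (kummerG al b (- x) u)"
proof -
  define q where "q = (1 - 2 * al) / 4"
  have u2: "u\<^sup>2 = u powr 2" using powr_realpow[OF u, of 2] by simp
  have e1: "(u\<^sup>2) powr (al - b - 1) = u powr (2 * (al - b - 1))"
    unfolding u2 by (simp add: powr_powr)
  have e2: "(x * u\<^sup>2) powr q = x powr q * u powr (2 * q)"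
  proof -
    have a: "(x * u\<^sup>2) powr q = x powr q * (u\<^sup>2) powr q" using u x by (simp add: powr_mult)
    have "(u\<^sup>2) powr q = u powr (2 * q)" unfolding u2 by (simp add: powr_powr)
    then show ?thesis using a by simp
  qed
  have e3: "sqrt (x * u\<^sup>2) = sqrt x * u" using u by (simp add: real_sqrt_mult)
  have e4: "u powr (2 * (al - b - 1)) * u powr (2 * q) * u = u powr (al - 2 * b - 1/2)"
  proof -
    have "u powr (2 * (al - b - 1)) * u powr (2 * q) * u powr 1 = u powr (2 * (al - b - 1) + 2 * q + 1)"
      by (simp only: powr_add)
    also have "2 * (al - b - 1) + 2 * q + 1 = al - 2 * b - 1/2" unfolding q_def by (simp add: field_simps)
    finally show ?thesis using u powr_one[of u] by simp
  qed
  have "(u\<^sup>2) powr (al - b - 1) * exp (- (u\<^sup>2)) * hh al (x * u\<^sup>2) * (2 * u)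
     = 2 * x powr q * (exp (- (u\<^sup>2)) * exp (2 * (sqrt x * u))) * (u powr (2 * (al - b - 1)) * u powr (2 * q) * u)"
    unfolding hh_def e1 q_def[symmetric] e2 e3 by (simp add: mult_ac)
  also have "\<dots> = 2 * x powr q * exp (kummerG al b (- x) u)"
    unfolding e4 exp_G[OF u] by (simp add: exp_add[symmetric] mult_ac)
  finally show ?thesis unfolding q_def .
qed

lemma kummerM_nonneg:
  fixes a al x :: real assumes a: "a > 0" and al: "al > 0" and x: "x \<ge> 0"
  shows "kummerM a al x \<ge> 0"
proof -
  have t: "0 \<le> pochhammer a k / pochhammer al k * x ^ k / fact k" for k
  proof -
    have "0 \<le> pochhammer a k" using pochhammer_nonneg[OF a] .
    moreover have "0 \<le> pochhammer al k" using pochhammer_nonneg[OF al] .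
    moreover have "0 \<le> x ^ k" using x by simp
    ultimately show ?thesis by simp
  qed
  show ?thesis unfolding kummerM_def
    by (rule suminf_nonneg[OF summable_norm_cancel[OF summable_M[OF al]] t])
qed

theorem lemma4p3:
  fixes n :: nat
  assumes "n \<ge> 2"
  defines "\<alpha> \<equiv> 1 - 1 / real n"
  shows "\<exists>C > 0. \<forall>\<beta> y :: real. \<beta> \<le> 0 \<longrightarrow> y \<le> -1 \<longrightarrow>
    (1 / C) * (exp y * (- y) powr ((1 - 2 * \<alpha>) / 4) / Gamma (\<alpha> - \<beta>))
        * (LBINT u:{1 / sqrt (- y)<..}. exp (kummerG \<alpha> \<beta> y u))
      \<le> kummerM \<beta> \<alpha> y
    \<and> kummerM \<beta> \<alpha> y
      \<le> C * (exp y * (- y) powr ((1 - 2 * \<alpha>) / 4) / Gamma (\<alpha> - \<beta>))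
        * (LBINT u:{0<..}. exp (kummerG \<alpha> \<beta> y u))"
proof -
  have n2: "real n \<ge> 2" using assms(1) by simp
  have al1: "1/2 \<le> \<alpha>" unfolding \<alpha>_def using n2 by (simp add: field_simps)
  have al2: "\<alpha> < 1" unfolding \<alpha>_def using n2 by simp
  have al0: "\<alpha> > 0" using al1 by simp
  obtain c C where c0: "c > 0" and C0: "C > 0"
    and lo: "\<And>s. s \<ge> 1 \<Longrightarrow> c * hh \<alpha> s \<le> F0 \<alpha> s"
    and up: "\<And>s. s > 0 \<Longrightarrow> F0 \<alpha> s \<le> C * hh \<alpha> s"
    using F0_bounds[OF al1 al2] by blast
  define K where "K = max (1 / (2 * c)) (2 * C)"
  have K0: "K > 0" unfolding K_def using C0 by simp
  have K1: "1 / K \<le> 2 * c"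
  proof -
    have "1 / (2 * c) \<le> K" unfolding K_def by simp
    then show ?thesis using c0 K0 by (simp add: field_simps)
  qed
  have K2: "2 * C \<le> K" unfolding K_def by simp
  show ?thesis
  proof (rule exI[of _ K], intro conjI allI impI K0)
    fix \<beta> y :: real assume b: "\<beta> \<le> 0" and y: "y \<le> -1"
    define x where "x = - y"
    have x1: "x \<ge> 1" unfolding x_def using y by simp
    have x0: "x > 0" using x1 by simp
    define a where "a = \<alpha> - \<beta>"
    have a0: "a > 0" unfolding a_def using b al0 by simp
    define q where "q = (1 - 2 * \<alpha>) / 4"
    define Eg where "Eg u = exp (kummerG \<alpha> \<beta> y u)" for u
    have Eg0: "Eg u \<ge> 0" for u unfolding Eg_def by simp
    have Egm[measurable]: "Eg \<in> borel_measurable borel" unfolding Eg_def kummerG_def by measurable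
    define f where "f t = t powr (a - 1) * exp (- t) * hh \<alpha> (x * t)" for t
    have [measurable]: "f \<in> borel_measurable borel" unfolding f_def hh_def by measurable
    have f0: "f t \<ge> 0" for t unfolding f_def hh_def by simp
    define kM where "kM = kummerM a \<alpha> x"
    have kM0: "kM \<ge> 0" unfolding kM_def using kummerM_nonneg[OF a0 al0] x0 by simp
    have Ga: "Gamma a > 0" using a0 by (rule Gamma_real_pos)
    have kt: "kummerM \<beta> \<alpha> y = exp y * kM"
      unfolding kM_def a_def x_def by (rule kummer_transform[OF al0])
    have gr: "ennreal (Gamma a * kM) = (\<integral>\<^sup>+t. ennreal (indicator {0..} t * t powr (a - 1) * exp (- t) * F0 \<alpha> (x * t)) \<partial>lborel)"
      unfolding kM_def by (rule gamma_rep[OF a0 al0]) (use x0 in simp)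
    have ff: "f (u\<^sup>2) * (2 * u) = 2 * x powr q * Eg u" if "u > 0" for u
      unfolding f_def Eg_def q_def a_def using f_formula[OF that x0, of \<alpha> \<beta>] by (simp add: x_def)
    have sx: "sqrt (1 / x) = 1 / sqrt x" by (simp add: real_sqrt_divide)
    have sxp: "1 / sqrt x > 0" using x0 by simp
    
    define IU where "IU = (\<integral>\<^sup>+u. ennreal (indicator {0<..} u * Eg u) \<partial>lborel)"
    define IC where "IC = (\<integral>\<^sup>+u. ennreal (indicator {1 / sqrt x..} u * Eg u) \<partial>lborel)"
    define IO where "IO = (\<integral>\<^sup>+u. ennreal (indicator {1 / sqrt x<..} u * Eg u) \<partial>lborel)"
    have upper: "ennreal (Gamma a * kM) \<le> ennreal C * (ennreal (2 * x powr q) * IU)"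
    proof -
      have "ennreal (Gamma a * kM) \<le> (\<integral>\<^sup>+t. ennreal C * ennreal (f t * indicator {0..} t) \<partial>lborel)"
        unfolding gr
      proof (rule nn_integral_mono)
        fix t
        show "ennreal (indicator {0..} t * t powr (a - 1) * exp (- t) * F0 \<alpha> (x * t)) \<le> ennreal C * ennreal (f t * indicator {0..} t)"
        proof (cases "t > 0")
          case True
          have "t powr (a - 1) * exp (- t) * F0 \<alpha> (x * t) \<le> t powr (a - 1) * exp (- t) * (C * hh \<alpha> (x * t))"
            using up[of "x * t"] x0 True by (intro mult_left_mono) auto
          then have "indicator {0..} t * t powr (a - 1) * exp (- t) * F0 \<alpha> (x * t) \<le> C * (f t * indicator {0..} t)"
            using True unfolding f_def by (simp add: mult_ac)
          then show ?thesis using C0 f0[of t] by (simp add: ennreal_mult[symmetric] ennreal_leI)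
        next
          case False
          then have "indicator {0..} t * t powr (a - 1) * exp (- t) * F0 \<alpha> (x * t) = 0"
            by (cases "t = 0") auto
          then show ?thesis by (metis ennreal_0 zero_le)
        qed
      qed
      also have "\<dots> = ennreal C * (\<integral>\<^sup>+t. ennreal (f t * indicator {0..} t) \<partial>lborel)"
        by (rule nn_integral_cmult) measurable
      also have "(\<integral>\<^sup>+t. ennreal (f t * indicator {0..} t) \<partial>lborel)
          = (\<integral>\<^sup>+u. ennreal (f (u\<^sup>2) * (2 * u) * indicator {sqrt 0..} u) \<partial>lborel)"
        by (rule sq_subst) auto
      also have "\<dots> = (\<integral>\<^sup>+u. ennreal (2 * x powr q) * ennreal (indicator {0<..} u * Eg u) \<partial>lborel)"
      proof (rule nn_integral_cong)
        fix u
        show "ennreal (f (u\<^sup>2) * (2 * u) * indicator {sqrt 0..} u) = ennreal (2 * x powr q) * ennreal (indicator {0<..} u * Eg u)"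
        proof (cases "u > 0")
          case True
          have i1: "indicator {sqrt 0..} u = (1::real)" "indicator {0<..} u = (1::real)" using True by auto
          have "f (u\<^sup>2) * (2 * u) * indicator {sqrt 0..} u = 2 * x powr q * Eg u"
            by (simp only: i1 mult_1_right ff[OF True])
          moreover have "ennreal (2 * x powr q) * ennreal (indicator {0<..} u * Eg u) = ennreal (2 * x powr q * Eg u)"
            unfolding i1 mult_1_left using Eg0[of u] x0 by (simp add: ennreal_mult[symmetric])
          ultimately show ?thesis by (simp only:)
        next
          case False
          then show ?thesis by (cases "u = 0") auto
        qed
      qed
      also have "\<dots> = ennreal (2 * x powr q) * IU" unfolding IU_def
        by (rule nn_integral_cmult) measurable
      finally show ?thesis .
    qed
    have lower: "ennreal c * (ennreal (2 * x powr q) * IC) \<le> ennreal (Gamma a * kM)"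
    proof -
      have "ennreal c * (ennreal (2 * x powr q) * IC) = ennreal c * (\<integral>\<^sup>+u. ennreal (2 * x powr q) * ennreal (indicator {1 / sqrt x..} u * Eg u) \<partial>lborel)"
      proof -
        have "(\<integral>\<^sup>+u. ennreal (2 * x powr q) * ennreal (indicator {1 / sqrt x..} u * Eg u) \<partial>lborel) = ennreal (2 * x powr q) * IC"
          unfolding IC_def by (rule nn_integral_cmult) measurable
        then show ?thesis by simp
      qed
      also have "(\<integral>\<^sup>+u. ennreal (2 * x powr q) * ennreal (indicator {1 / sqrt x..} u * Eg u) \<partial>lborel)
          = (\<integral>\<^sup>+u. ennreal (f (u\<^sup>2) * (2 * u) * indicator {sqrt (1 / x)..} u) \<partial>lborel)"
      proof (rule nn_integral_cong)
        fix u
        show "ennreal (2 * x powr q) * ennreal (indicator {1 / sqrt x..} u * Eg u) = ennreal (f (u\<^sup>2) * (2 * u) * indicator {sqrt (1 / x)..} u)"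
        proof (cases "u \<ge> 1 / sqrt x")
          case True
          then have "u > 0" using sxp by linarith
          then have u0: "u > 0" .
          have i1: "indicator {sqrt (1 / x)..} u = (1::real)" "indicator {1 / sqrt x..} u = (1::real)" using True unfolding sx by auto
          have "f (u\<^sup>2) * (2 * u) * indicator {sqrt (1 / x)..} u = 2 * x powr q * Eg u"
            by (simp only: i1 mult_1_right ff[OF u0])
          moreover have "ennreal (2 * x powr q) * ennreal (indicator {1 / sqrt x..} u * Eg u) = ennreal (2 * x powr q * Eg u)"
            unfolding i1 mult_1_left using Eg0[of u] x0 by (simp add: ennreal_mult[symmetric])
          ultimately show ?thesis by (simp only:)
        next
          case False
          then show ?thesis unfolding sx by simp
        qed
      qed
      also have "\<dots> = (\<integral>\<^sup>+t. ennreal (f t * indicator {1 / x..} t) \<partial>lborel)"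
        by (rule sq_subst[symmetric]) (use x0 in auto)
      finally have eq: "ennreal c * (ennreal (2 * x powr q) * IC) = ennreal c * (\<integral>\<^sup>+t. ennreal (f t * indicator {1 / x..} t) \<partial>lborel)" .
      also have "\<dots> = (\<integral>\<^sup>+t. ennreal c * ennreal (f t * indicator {1 / x..} t) \<partial>lborel)"
        by (rule nn_integral_cmult[symmetric]) measurable
      also have "\<dots> \<le> (\<integral>\<^sup>+t. ennreal (indicator {0..} t * t powr (a - 1) * exp (- t) * F0 \<alpha> (x * t)) \<partial>lborel)"
      proof (rule nn_integral_mono)
        fix t
        show "ennreal c * ennreal (f t * indicator {1 / x..} t) \<le> ennreal (indicator {0..} t * t powr (a - 1) * exp (- t) * F0 \<alpha> (x * t))"
        proof (cases "t \<ge> 1 / x")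
          case True
          moreover have "1 / x > 0" using x0 by simp
          ultimately have t0: "t > 0" by linarith
          have xt: "x * t \<ge> 1" using True x0 by (simp add: field_simps)
          have "t powr (a - 1) * exp (- t) * (c * hh \<alpha> (x * t)) \<le> t powr (a - 1) * exp (- t) * F0 \<alpha> (x * t)"
            using lo[OF xt] by (intro mult_left_mono) auto
          then have "c * (f t * indicator {1 / x..} t) \<le> indicator {0..} t * t powr (a - 1) * exp (- t) * F0 \<alpha> (x * t)"
            using True t0 unfolding f_def by (simp add: mult_ac)
          then show ?thesis using c0 f0[of t] by (simp add: ennreal_mult[symmetric] ennreal_leI)
        next
          case False then show ?thesis by simp
        qed
      qed
      finally show ?thesis unfolding gr .
    qed
    have IC_fin: "IC < \<infinity>"
    proof (rule ccontr)
      assume "\<not> IC < \<infinity>"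
      then have "IC = \<infinity>" by (metis infinity_ennreal_def less_top)
      then have "ennreal c * (ennreal (2 * x powr q) * IC) = \<infinity>" using c0 x0 by (simp add: ennreal_mult_eq_top_iff)
      then show False using lower by (simp add: top_unique)
    qed
    have IS_fin: "(\<integral>\<^sup>+u. ennreal (indicator {0<..<1 / sqrt x} u * Eg u) \<partial>lborel) < \<infinity>"
    proof -
      have "(\<integral>\<^sup>+u. ennreal (indicator {0<..<1 / sqrt x} u * Eg u) \<partial>lborel) \<le> (\<integral>\<^sup>+u. ennreal (exp 2) * indicator {0<..<1 / sqrt x} u \<partial>lborel)"
      proof (rule nn_integral_mono)
        fix u
        show "ennreal (indicator {0<..<1 / sqrt x} u * Eg u) \<le> ennreal (exp 2) * indicator {0<..<1 / sqrt x} u"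
        proof (cases "u \<in> {0<..<1 / sqrt x}")
          case True
          then have u0: "u > 0" and u1: "u < 1 / sqrt x" by auto
          have sx1: "sqrt x \<ge> 1" using x1 by simp
          have "1 / sqrt x \<le> 1" using sx1 by simp
          then have uu: "u \<le> 1" using u1 by linarith
          have "sqrt x * u \<le> 1" using u1 x0 by (simp add: field_simps)
          moreover have "2 * sqrt (- y) * u = 2 * (sqrt x * u)" unfolding x_def by simp
          moreover have "u\<^sup>2 \<ge> 0" by simp
          ultimately have e: "- (u\<^sup>2) + 2 * sqrt (- y) * u \<le> 2" by linarith
          have p: "u powr (\<alpha> - 2 * \<beta> - 1/2) \<le> 1" using al1 b u0 uu by (intro powr_le1) auto
          have "Eg u = exp (- (u\<^sup>2) + 2 * sqrt (- y) * u) * u powr (\<alpha> - 2 * \<beta> - 1/2)"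
            unfolding Eg_def by (rule exp_G[OF u0])
          also have "\<dots> \<le> exp 2 * 1" using e p by (intro mult_mono) auto
          finally show ?thesis using True by (simp add: ennreal_leI)
        next
          case False then show ?thesis by simp
        qed
      qed
      also have "\<dots> = ennreal (exp 2) * ennreal (1 / sqrt x)"
        using sxp by (subst nn_integral_cmult_indicator) auto
      also have "\<dots> < \<infinity>" by (simp add: ennreal_mult_less_top)
      finally show ?thesis .
    qed
    have IU_split: "IU = (\<integral>\<^sup>+u. ennreal (indicator {0<..<1 / sqrt x} u * Eg u) \<partial>lborel) + IC"
    proof -
      have "IU = (\<integral>\<^sup>+u. ennreal (indicator {0<..<1 / sqrt x} u * Eg u) + ennreal (indicator {1 / sqrt x..} u * Eg u) \<partial>lborel)"
        unfolding IU_def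
      proof (rule nn_integral_cong)
        fix u
        show "ennreal (indicator {0<..} u * Eg u) = ennreal (indicator {0<..<1 / sqrt x} u * Eg u) + ennreal (indicator {1 / sqrt x..} u * Eg u)"
        proof (cases "u > 0")
          case True then show ?thesis by (cases "u < 1 / sqrt x") auto
        next
          case False
          then have "u < 1 / sqrt x" using sxp by linarith
          then show ?thesis using False by auto
        qed
      qed
      also have "\<dots> = (\<integral>\<^sup>+u. ennreal (indicator {0<..<1 / sqrt x} u * Eg u) \<partial>lborel) + IC"
        unfolding IC_def by (rule nn_integral_add) measurable
      finally show ?thesis .
    qed
    have IU_fin: "IU < \<infinity>" unfolding IU_split using IS_fin IC_fin by simp
    have IO_le: "IO \<le> IC" unfolding IO_def IC_def
      by (intro nn_integral_mono ennreal_leI mult_right_mono Eg0) (simp add: indicator_def)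
    have IO_fin: "IO < \<infinity>" using IO_le IC_fin by (simp add: le_less_trans)
    define LU where "LU = (LBINT u:{0<..}. exp (kummerG \<alpha> \<beta> y u))"
    define LL where "LL = (LBINT u:{1 / sqrt (- y)<..}. exp (kummerG \<alpha> \<beta> y u))"
    have LU_eq: "ennreal LU = IU" unfolding LU_def IU_def Eg_def[symmetric]
      by (rule set_int_nn[OF Egm _ Eg0 IU_fin[unfolded IU_def]]) simp
    have LL_eq: "ennreal LL = IO" unfolding LL_def IO_def Eg_def[symmetric] x_def[symmetric]
      by (rule set_int_nn[OF Egm _ Eg0 IO_fin[unfolded IO_def]]) simp
    have LU0: "LU \<ge> 0" unfolding LU_def set_lebesgue_integral_def Eg_def[symmetric]
      by (intro integral_nonneg_AE) (simp add: Eg0)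
    have LL0: "LL \<ge> 0" unfolding LL_def set_lebesgue_integral_def Eg_def[symmetric]
      by (intro integral_nonneg_AE) (simp add: Eg0)
    have xq: "x powr q > 0" using x0 by simp
    have upr: "Gamma a * kM \<le> C * (2 * x powr q) * LU"
    proof -
      have "ennreal (Gamma a * kM) \<le> ennreal (C * (2 * x powr q) * LU)"
        using upper unfolding LU_eq[symmetric] using C0 xq LU0
        by (simp add: ennreal_mult[symmetric] mult.assoc)
      then show ?thesis using C0 xq LU0 by (simp add: ennreal_le_iff)
    qed
    have lwr: "c * (2 * x powr q) * LL \<le> Gamma a * kM"
    proof -
      have "ennreal (c * (2 * x powr q) * LL) = ennreal c * (ennreal (2 * x powr q) * IO)"
        unfolding LL_eq[symmetric] using c0 xq LL0 by (simp add: ennreal_mult[symmetric] mult.assoc)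
      also have "\<dots> \<le> ennreal c * (ennreal (2 * x powr q) * IC)"
        using IO_le by (intro mult_left_mono) auto
      also have "\<dots> \<le> ennreal (Gamma a * kM)" by (rule lower)
      finally show ?thesis using Ga kM0 by (simp add: ennreal_le_iff)
    qed
    define A where "A = exp y * x powr q / Gamma a"
    have A0: "A > 0" unfolding A_def using Ga xq by simp
    have fin_up: "exp y * kM \<le> K * A * LU"
    proof -
      have "exp y * kM \<le> exp y * (C * (2 * x powr q) * LU / Gamma a)"
        using upr Ga by (intro mult_left_mono) (auto simp: field_simps)
      also have "\<dots> = (2 * C) * A * LU" unfolding A_def by (simp add: field_simps)
      also have "\<dots> \<le> K * A * LU" using K2 A0 LU0 by (intro mult_right_mono) auto
      finally show ?thesis .
    qed
    have fin_lo: "1 / K * A * LL \<le> exp y * kM"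
    proof -
      have "1 / K * A * LL \<le> (2 * c) * A * LL" using K1 A0 LL0 by (intro mult_right_mono) auto
      also have "\<dots> = exp y * (c * (2 * x powr q) * LL / Gamma a)" unfolding A_def by (simp add: field_simps)
      also have "\<dots> \<le> exp y * kM"
        using lwr Ga by (intro mult_left_mono) (auto simp: field_simps)
      finally show ?thesis .
    qed
    have Aeq: "exp y * (- y) powr ((1 - 2 * \<alpha>) / 4) / Gamma (\<alpha> - \<beta>) = A"
      unfolding A_def x_def q_def a_def ..
    show "1 / K * (exp y * (- y) powr ((1 - 2 * \<alpha>) / 4) / Gamma (\<alpha> - \<beta>)) *
        (LBINT u:{1 / sqrt (- y)<..}. exp (kummerG \<alpha> \<beta> y u)) \<le> kummerM \<beta> \<alpha> y"
      unfolding Aeq LL_def[symmetric] kt using fin_lo .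
    show "kummerM \<beta> \<alpha> y \<le> K * (exp y * (- y) powr ((1 - 2 * \<alpha>) / 4) / Gamma (\<alpha> - \<beta>)) *
        (LBINT u:{0<..}. exp (kummerG \<alpha> \<beta> y u))"
      unfolding Aeq LU_def[symmetric] kt using fin_up .
  qed
qed

end
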